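(* Let $\alpha,\beta$ be real numbers with $0<\alpha<2$ and $0<\beta<2$. There exist constants $c,C>0$ and $N$, independent of $n$, such that for every natural number $n>N$ there is a set $P\subset[0,1]^2$ of $n$ points with $$c\,n^2\le |\Pi_{\alpha,\beta}(P)|\le C\,n^2 .$$
   Context: For a finite set $P\subset\mathbb R^2$ and real numbers $\alpha,\beta$, define the set of ordered triples $$\Pi_{\alpha,\beta}(P)=\{(p,q,r)\in P\times P\times P:\ p\cdot q=\alpha \text{ and } p\cdot r=\beta\},$$ where $\cdot$ is the standard dot product on $\mathbb R^2$ (the points $p,q,r$ need not be distinct). *)

theory Defs
  imports "HOL-Analysis.Analysis"
begin

definition Pi_ab :: "real \<Rightarrow> real \<Rightarrow> (real^2) set \<Rightarrow> ((real^2) \<times> (real^2) \<times> (real^2)) set" where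
  "Pi_ab \<alpha> \<beta> P = {(p, q, r). p \<in> P \<and> q \<in> P \<and> r \<in> P \<and> p \<bullet> q = \<alpha> \<and> p \<bullet> r = \<beta>}"

definition unit_square :: "(real^2) set" where
  "unit_square = {x. \<forall>i. 0 \<le> x $ i \<and> x $ i \<le> 1}"

end

theory Submission
  imports Defs
begin

lemma inner2: "(x::real^2) \<bullet> y = x$1*y$1 + x$2*y$2"
  by (simp add: inner_vec_def sum_2)

lemma line_unique:
  fixes p q q' :: "real^2"
  assumes "p$1 \<noteq> p$2" "q$1 + q$2 = g" "q'$1 + q'$2 = g" "p \<bullet> q = a" "p \<bullet> q' = a"
  shows "q = q'"
proof -
  have e1: "(p$1 - p$2) * q$1 = a - p$2 * g"
    using assms(2,4) unfolding inner2 by (auto simp: algebra_simps)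
  have e2: "(p$1 - p$2) * q'$1 = a - p$2 * g"
    using assms(3,5) unfolding inner2 by (auto simp: algebra_simps)
  have "(p$1 - p$2) * (q$1 - q'$1) = 0" using e1 e2 by (simp add: algebra_simps)
  hence "q$1 = q'$1" using assms(1) by simp
  moreover have "q$2 = q'$2" using calculation assms(2,3) by simp
  ultimately show ?thesis by (simp add: vec_eq_iff forall_2)
qed

lemma card_line_le1:
  fixes p :: "real^2" and Q :: "(real^2) set"
  assumes "finite Q" "p$1 \<noteq> p$2" "\<And>q. q \<in> Q \<Longrightarrow> q$1 + q$2 = g"
  shows "card {q\<in>Q. p \<bullet> q = a} \<le> 1"
proof -
  have "\<forall>x\<in>{q\<in>Q. p \<bullet> q = a}. \<forall>y\<in>{q\<in>Q. p \<bullet> q = a}. x = y"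
    using line_unique[OF assms(2)] assms(3) by blast
  then show ?thesis using card_le_Suc0_iff_eq[of "{q\<in>Q. p \<bullet> q = a}"] assms(1) by auto
qed

lemma main:
  fixes \<alpha> \<beta> :: real and n :: nat
  assumes ha: "0 < \<alpha>" "\<alpha> < 2" and hb: "0 < \<beta>" "\<beta> < 2" and hn: "n \<ge> 4"
  shows "\<exists>P. P \<subseteq> unit_square \<and> finite P \<and> card P = n \<and>
               1/16 * real n ^ 2 \<le> real (card (Pi_ab \<alpha> \<beta> P)) \<and>
               real (card (Pi_ab \<alpha> \<beta> P)) \<le> 10 * real n ^ 2"
proof -
  define \<delta> where "\<delta> = min (min \<alpha> (2-\<alpha>)) (min \<beta> (2-\<beta>)) / 2"
  have d0: "\<delta> > 0" using ha hb by (simp add: \<delta>_def)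
  define m where "m = real n"
  have m0: "m > 0" using hn by (simp add: m_def)
  define t where "t = (\<lambda>i::nat. \<delta> * real (Suc i) / m)"
  define a where "a = (\<lambda>i. vector [\<alpha>/2 + t i, \<alpha>/2 - t i] :: real^2)"
  define b where "b = (\<lambda>i. vector [\<beta>/2 - t i, \<beta>/2 + t i] :: real^2)"
  define k1 where "k1 = (n - 1) div 2"
  define k2 where "k2 = n - 1 - k1"
  define p0 where "p0 = (vector [1,1] :: real^2)"
  define A where "A = a ` {..<k1}"
  define B where "B = b ` {..<k2}"
  define P where "P = insert p0 (A \<union> B)"
  have tpos: "t i > 0" for i using d0 m0 by (simp add: t_def)
  have tle: "t i \<le> \<delta>" if "i < n" for i
  proof -
    have "real (Suc i) \<le> m" using that by (simp add: m_def)
    hence "\<delta> * real (Suc i) \<le> \<delta> * m" using d0 by (simp add: mult_left_mono)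
    thus ?thesis using m0 by (simp add: t_def divide_le_eq)
  qed
  have tinj: "t i = t j \<Longrightarrow> i = j" for i j using d0 m0 by (simp add: t_def)
  have k1n: "k1 < n" "k2 < n" using hn by (auto simp: k1_def k2_def)
  have injA: "inj_on a {..<k1}"
    by (rule inj_onI) (auto simp: a_def vec_eq_iff forall_2 dest: tinj)
  have injB: "inj_on b {..<k2}"
    by (rule inj_onI) (auto simp: b_def vec_eq_iff forall_2 dest: tinj)
  have cA: "card A = k1" using injA by (simp add: A_def card_image)
  have cB: "card B = k2" using injB by (simp add: B_def card_image)
  have sumA: "q$1 + q$2 = \<alpha>" "q$1 \<noteq> q$2" if "q \<in> A" for q
    using that tpos by (auto simp: A_def a_def) (metis less_irrefl)
  have sumB: "q$1 + q$2 = \<beta>" "q$1 \<noteq> q$2" if "q \<in> B" for q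
    using that tpos by (auto simp: B_def b_def) (metis less_irrefl)
  have sumA': "q$1 > q$2" if "q \<in> A" for q
    using that tpos by (auto simp: A_def a_def)
  have sumB': "q$1 < q$2" if "q \<in> B" for q
    using that tpos by (auto simp: B_def b_def)
  have AB: "A \<inter> B = {}" using sumA' sumB' by fastforce
  have p0AB: "p0 \<notin> A \<union> B" using sumA' sumB' by (force simp: p0_def)
  have finP: "finite P" by (simp add: P_def A_def B_def)
  have cP: "card P = n"
  proof -
    have "card P = Suc (card (A \<union> B))" using p0AB by (simp add: P_def A_def B_def)
    also have "card (A \<union> B) = k1 + k2" using AB cA cB card_Un_disjoint[of A B]
      by (simp add: A_def B_def)
    finally show ?thesis using hn by (simp add: k1_def k2_def)
  qed
  have sq: "P \<subseteq> unit_square"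
  proof
    fix x assume "x \<in> P"
    then consider "x = p0" | i where "i < k1" "x = a i" | i where "i < k2" "x = b i"
      by (auto simp: P_def A_def B_def)
    then show "x \<in> unit_square"
    proof cases
      case 1 then show ?thesis by (simp add: unit_square_def p0_def forall_2)
    next
      case 2
      have "t i \<le> \<delta>" using tle 2 k1n by simp
      moreover have "\<delta> \<le> \<alpha>/2" "\<delta> \<le> (2-\<alpha>)/2" by (auto simp: \<delta>_def)
      ultimately show ?thesis using 2 tpos[of i]
        by (simp add: unit_square_def a_def forall_2)
    next
      case 3
      have "t i \<le> \<delta>" using tle 3 k1n by simp
      moreover have "\<delta> \<le> \<beta>/2" "\<delta> \<le> (2-\<beta>)/2" by (auto simp: \<delta>_def)
      ultimately show ?thesis using 3 tpos[of i]
        by (simp add: unit_square_def b_def forall_2)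
    qed
  qed
  have finPi: "finite (Pi_ab \<alpha> \<beta> P)"
    by (rule finite_subset[of _ "P \<times> P \<times> P"]) (auto simp: Pi_ab_def finP)
  have low: "{p0} \<times> A \<times> B \<subseteq> Pi_ab \<alpha> \<beta> P"
    using sumA sumB by (auto simp: Pi_ab_def P_def p0_def inner2)
  have "card ({p0} \<times> A \<times> B) = k1 * k2"
    by (simp add: card_cartesian_product cA cB)
  hence lowc: "k1 * k2 \<le> card (Pi_ab \<alpha> \<beta> P)"
    using card_mono[OF finPi low] by simp
  have h1: "2 * k1 \<ge> n - 2" "2 * k2 \<ge> n - 1" using hn by (auto simp: k1_def k2_def)
  have r1: "2 * real k1 \<ge> real n - 2" "2 * real k2 \<ge> real n - 1"
    using h1 hn by linarith+
  have L1: "4 * (real k1 * real k2) \<ge> (real n - 2) * (real n - 1)"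
  proof -
    have "(real n - 2) * (real n - 1) \<le> (2 * real k1) * (real n - 1)"
      using r1 hn by (intro mult_right_mono) auto
    also have "\<dots> \<le> (2 * real k1) * (2 * real k2)"
      using r1 by (intro mult_left_mono) auto
    finally show ?thesis by simp
  qed
  have L2: "(real n - 2) * (real n - 1) \<ge> 1/4 * real n ^ 2"
  proof -
    have "real n \<ge> 4" using hn by simp
    hence "(real n - 4) * (3 * real n) + 8 \<ge> 0" by (simp add: add_nonneg_nonneg mult_nonneg_nonneg)
    thus ?thesis by (simp add: power2_eq_square algebra_simps)
  qed
  have lowfin: "1/16 * real n ^ 2 \<le> real (card (Pi_ab \<alpha> \<beta> P))"
  proof -
    have "real (k1 * k2) \<le> real (card (Pi_ab \<alpha> \<beta> P))" using lowc by (simp only: of_nat_le_iff)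
    moreover have "real (k1 * k2) = real k1 * real k2" by simp
    ultimately show ?thesis using L1 L2 by linarith
  qed
  define S where "S = (\<lambda>g p. {q\<in>P. p \<bullet> q = g})"
  have S3: "card (S g p) \<le> 3" if "p \<in> P" "p \<noteq> p0" for g p
  proof -
    have pd: "p$1 \<noteq> p$2" using that sumA sumB by (auto simp: P_def)
    have "S g p \<subseteq> insert p0 ({q\<in>A. p \<bullet> q = g} \<union> {q\<in>B. p \<bullet> q = g})"
      by (auto simp: S_def P_def)
    hence "card (S g p) \<le> card (insert p0 ({q\<in>A. p \<bullet> q = g} \<union> {q\<in>B. p \<bullet> q = g}))"
      by (intro card_mono) (auto simp: A_def B_def)
    also have "\<dots> \<le> Suc (card ({q\<in>A. p \<bullet> q = g} \<union> {q\<in>B. p \<bullet> q = g}))"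
      by (simp add: card_insert_le_m1 A_def B_def card_insert_if)
    also have "card ({q\<in>A. p \<bullet> q = g} \<union> {q\<in>B. p \<bullet> q = g}) \<le>
       card {q\<in>A. p \<bullet> q = g} + card {q\<in>B. p \<bullet> q = g}" by (rule card_Un_le)
    also have "card {q\<in>A. p \<bullet> q = g} \<le> 1"
      by (rule card_line_le1[OF _ pd sumA(1)]) (auto simp: A_def)
    also have "card {q\<in>B. p \<bullet> q = g} \<le> 1"
      by (rule card_line_le1[OF _ pd sumB(1)]) (auto simp: B_def)
    finally show ?thesis by simp
  qed
  have up: "Pi_ab \<alpha> \<beta> P \<subseteq> ({p0} \<times> P \<times> P) \<union> (SIGMA p:P-{p0}. S \<alpha> p \<times> S \<beta> p)"
    by (auto simp: Pi_ab_def S_def)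
  have finS: "finite (S g p)" for g p using finP by (simp add: S_def)
  have "card (SIGMA p:P-{p0}. S \<alpha> p \<times> S \<beta> p) = (\<Sum>p\<in>P-{p0}. card (S \<alpha> p \<times> S \<beta> p))"
    using finP finS by simp
  also have "\<dots> \<le> (\<Sum>p\<in>P-{p0}. 9)"
  proof (rule sum_mono)
    fix p assume "p \<in> P - {p0}"
    hence "card (S \<alpha> p) \<le> 3" "card (S \<beta> p) \<le> 3" using S3 by auto
    thus "card (S \<alpha> p \<times> S \<beta> p) \<le> 9"
    proof -
      have "card (S \<alpha> p) * card (S \<beta> p) \<le> 3 * 3" by (rule mult_le_mono) fact+
      thus ?thesis by (simp add: card_cartesian_product)
    qed
  qed
  also have "\<dots> \<le> 9 * n" using cP card_Diff1_le[of P p0] by simp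
  finally have c2: "card (SIGMA p:P-{p0}. S \<alpha> p \<times> S \<beta> p) \<le> 9 * n" .
  have c1: "card ({p0} \<times> P \<times> P) = n * n" by (simp add: card_cartesian_product cP)
  have "card (Pi_ab \<alpha> \<beta> P) \<le> card (({p0} \<times> P \<times> P) \<union> (SIGMA p:P-{p0}. S \<alpha> p \<times> S \<beta> p))"
    by (rule card_mono[OF _ up]) (use finP finS in auto)
  also have "\<dots> \<le> card ({p0} \<times> P \<times> P) + card (SIGMA p:P-{p0}. S \<alpha> p \<times> S \<beta> p)"
    by (rule card_Un_le)
  also have "\<dots> \<le> n * n + 9 * n" using c1 c2 by linarith
  also have "\<dots> \<le> 10 * n * n" using hn by simp
  finally have "real (card (Pi_ab \<alpha> \<beta> P)) \<le> real (10 * n * n)" by linarith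
  hence upfin: "real (card (Pi_ab \<alpha> \<beta> P)) \<le> 10 * real n ^ 2"
    by (simp add: power2_eq_square)
  show ?thesis using sq finP cP lowfin upfin by blast
qed

theorem proposition1:
  fixes \<alpha> \<beta> :: real
  assumes "0 < \<alpha>" "\<alpha> < 2" "0 < \<beta>" "\<beta> < 2"
  shows "\<exists>c C :: real. \<exists>N :: nat. c > 0 \<and> C > 0 \<and>
           (\<forall>n > N. \<exists>P. P \<subseteq> unit_square \<and> finite P \<and> card P = n \<and>
               c * real n ^ 2 \<le> real (card (Pi_ab \<alpha> \<beta> P)) \<and>
               real (card (Pi_ab \<alpha> \<beta> P)) \<le> C * real n ^ 2)"
proof -
  have "\<forall>n > 3. \<exists>P. P \<subseteq> unit_square \<and> finite P \<and> card P = n \<and>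
               1/16 * real n ^ 2 \<le> real (card (Pi_ab \<alpha> \<beta> P)) \<and>
               real (card (Pi_ab \<alpha> \<beta> P)) \<le> 10 * real n ^ 2"
    using main[OF assms] by simp
  then show ?thesis by (intro exI[of _ "1/16"] exI[of _ 10] exI[of _ 3]) simp
qed

end
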